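(* Let $C$ be a finite set of level constraints in normal form with $\mathcal{I}(C) \cap \mathcal{I}_{fresh} = \emptyset$. If $C; id \leadsto^* \bot$ by a finite sequence of unification steps, then there is no level substitution $\theta$ with $\theta \vDash C$.
   Context: Levels: $l ::= i \mid \mathtt{z} \mid \mathtt{s}\,l \mid l \sqcup l'$, $i$ in an infinite totally ordered set $\mathcal{I}$ of level variables; $\simeq$ is the smallest congruence (closed under constructors and substitution of levels for variables) containing $i_1 \sqcup (i_2 \sqcup i_3) \approx (i_1 \sqcup i_2) \sqcup i_3$, $i_1 \sqcup i_2 \approx i_2 \sqcup i_1$, $\mathtt{s}(i_1 \sqcup i_2) \approx \mathtt{s}\,i_1 \sqcup \mathtt{s}\,i_2$, $i \sqcup \mathtt{s}\,i \approx \mathtt{s}\,i$, $i \sqcup \mathtt{z} \approx i$, $i \sqcup i \approx i$. Normal form of levels: $\mathtt{s}^k\,\mathtt{z} \sqcup (\sqcup_{i \in V} \mathtt{s}^{n_i}\,i)$ with $V$ a strictly increasing sequence of variables, $n_i \le k$; every $l$ has a unique normal form $\hat l \simeq l$. A constraint $l_1 = l_2$ is in normal form if both sides are in normal form, each variable occurring on both sides has the same exponent on both sides, and at least one exponent (of $\mathtt{z}$ or of a variable, on either side) is $0$; $\widehat{C}$ denotes putting each constraint of $C$ in normal form (normalize both sides, for a variable on both sides drop the occurrence with smaller exponent, then subtract the minimum exponent from all exponents). $\theta \vDash C$ means $l_1\theta \simeq l_2\theta$ for all $l_1 = l_2 \in C$. $id$ is the identity substitution. For substitutions: $dom\,\theta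 = \{i \mid i\theta \ne i\}$; $\mathcal{I}(l)$ is the set of variables of $l$; $range\,\theta = \bigcup_{i \in dom\,\theta} \mathcal{I}(i\theta)$; $\mathcal{I}(\theta) = dom\,\theta \cup range\,\theta$; $\widehat{\theta} = \{i \mapsto \widehat{i\theta}\}_{i \in dom\,\theta}$; $\theta\{l/j\} = \{i \mapsto (i\theta)\{l/j\}\}_{i \in dom\,\theta}$; $\mathcal{I}_{fresh} \subsetneq \mathcal{I}$ is a fixed infinite set of fresh variables. In normal-form levels, $\mathtt{z} \sqcup i$ means $\mathtt{s}^0\mathtt{z} \sqcup \mathtt{s}^0 i$, and "$\mathtt{s}^m\,x \in l$" means $\mathtt{s}^m\,x$ is a summand of $l$. The unification steps on pairs $C;\theta$ are: (Trivial) $\{l = l\} \cup C; \theta \leadsto C; \theta$. (Orient) $\{l = l'\} \cup C; \theta \leadsto \{l' = l\} \cup C; \theta$ if $l'$ is $\mathtt{z}$ or $\mathtt{z} \sqcup i$. (Eliminate 1) $\{\mathtt{z} \sqcup i = l\} \cup C; \theta \leadsto \widehat{C\{l/i\}}; (\widehat{\theta\{l/i\}}, i \mapsto l)$ if $i$ does not occur in $l$. (Eliminate 2) $\{\mathtt{z} \sqcup i = l\} \cup C; \theta \leadsto \widehat{C\{l'/i\}}; (\widehat{\theta\{l'/i\}}, i \mapsto l')$ where $l' = l\{i'/i\}$ for some $i' \in \mathcal{I}_{fresh} \setminus \mathcal{I}(i, l, C, \theta)$, if $\mathtt{s}^0\,i \in l$. (Decompose) $\{\mathtt{z} = \mathtt{z}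 \sqcup (\sqcup_{i \in V} i)\} \cup C; \theta \leadsto \{\mathtt{z} \sqcup i = \mathtt{z}\}_{i \in V} \cup C; \theta$. (Clash) $\{\mathtt{z} = l\} \cup C; \theta \leadsto \bot$ if $\mathtt{s}^n\,i \in l$ or $\mathtt{s}^n\,\mathtt{z} \in l$ for some $n \ne 0$. *)

theory Defs
  imports Main
begin

datatype 'v lvl = LVar 'v | LZ | LS "'v lvl" | LMax "'v lvl" "'v lvl"

definition spow :: "nat \<Rightarrow> 'v lvl \<Rightarrow> 'v lvl" where
  "spow n l = (LS ^^ n) l"

text \<open>The congruence \<open>\<simeq>\<close>: smallest congruence containing all instances of the axioms
  (closure under substitution is obtained by taking all instances).\<close>
inductive leqv :: "'v lvl \<Rightarrow> 'v lvl \<Rightarrow> bool" where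
  lrefl: "leqv l l"
| lsym: "leqv a b \<Longrightarrow> leqv b a"
| ltrans: "leqv a b \<Longrightarrow> leqv b c \<Longrightarrow> leqv a c"
| lcongS: "leqv a b \<Longrightarrow> leqv (LS a) (LS b)"
| lcongMax: "leqv a a' \<Longrightarrow> leqv b b' \<Longrightarrow> leqv (LMax a b) (LMax a' b')"
| lassoc: "leqv (LMax a (LMax b c)) (LMax (LMax a b) c)"
| lcomm: "leqv (LMax a b) (LMax b a)"
| lsdist: "leqv (LS (LMax a b)) (LMax (LS a) (LS b))"
| labsorb: "leqv (LMax a (LS a)) (LS a)"
| lzero: "leqv (LMax a LZ) a"
| lidem: "leqv (LMax a a) a"

fun lvars :: "'v lvl \<Rightarrow> 'v set" where
  "lvars (LVar i) = {i}"
| "lvars LZ = {}"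
| "lvars (LS l) = lvars l"
| "lvars (LMax a b) = lvars a \<union> lvars b"

fun lsubst :: "('v \<Rightarrow> 'v lvl) \<Rightarrow> 'v lvl \<Rightarrow> 'v lvl" where
  "lsubst \<sigma> (LVar i) = \<sigma> i"
| "lsubst \<sigma> LZ = LZ"
| "lsubst \<sigma> (LS l) = LS (lsubst \<sigma> l)"
| "lsubst \<sigma> (LMax a b) = LMax (lsubst \<sigma> a) (lsubst \<sigma> b)"

definition lsubst1 :: "'v lvl \<Rightarrow> 'v lvl \<Rightarrow> 'v \<Rightarrow> 'v lvl" where
  "lsubst1 l l' j = lsubst (LVar(j := l')) l"

fun summands :: "'v lvl \<Rightarrow> 'v lvl set" where
  "summands (LMax a b) = summands a \<union> summands b"
| "summands l = {l}"

text \<open>Normal-form data \<open>(k, [(i1,n1),...,(im,nm)])\<close> standing for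
  \<open>s^k z \<squnion> (s^n1 i1 \<squnion> (... \<squnion> s^nm im))\<close>.\<close>
type_synonym 'v nfdata = "nat \<times> ('v \<times> nat) list"

fun joinr :: "'v lvl list \<Rightarrow> 'v lvl" where
  "joinr [] = LZ"
| "joinr [x] = x"
| "joinr (x # xs) = LMax x (joinr xs)"

definition lvl_of :: "('v::linorder) nfdata \<Rightarrow> 'v lvl" where
  "lvl_of d = (case d of (k, xs) \<Rightarrow>
     (if xs = [] then spow k LZ
      else LMax (spow k LZ) (joinr (map (\<lambda>(i, n). spow n (LVar i)) xs))))"

definition nf_wf :: "('v::linorder) nfdata \<Rightarrow> bool" where
  "nf_wf d = (case d of (k, xs) \<Rightarrow>
     sorted_wrt (<) (map fst xs) \<and> (\<forall>(i, n) \<in> set xs. n \<le> k))"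

definition is_nf :: "('v::linorder) lvl \<Rightarrow> bool" where
  "is_nf l = (\<exists>d. nf_wf d \<and> l = lvl_of d)"

definition nf_data :: "('v::linorder) lvl \<Rightarrow> 'v nfdata" where
  "nf_data l = (THE d. nf_wf d \<and> leqv (lvl_of d) l)"

definition lhat :: "('v::linorder) lvl \<Rightarrow> 'v lvl" where
  "lhat l = lvl_of (nf_data l)"

type_synonym 'v constr = "'v lvl \<times> 'v lvl"

definition c_nf :: "('v::linorder) constr \<Rightarrow> bool" where
  "c_nf c = (\<exists>k1 xs1 k2 xs2.
      nf_wf (k1, xs1) \<and> nf_wf (k2, xs2) \<and> c = (lvl_of (k1, xs1), lvl_of (k2, xs2)) \<and>
      (\<forall>i n m. (i, n) \<in> set xs1 \<longrightarrow> (i, m) \<in> set xs2 \<longrightarrow> n = m) \<and>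
      (k1 = 0 \<or> k2 = 0 \<or> (\<exists>(i, n) \<in> set xs1 \<union> set xs2. n = 0)))"

definition drop_smaller :: "('v \<times> nat) list \<Rightarrow> ('v \<times> nat) list \<Rightarrow> ('v \<times> nat) list" where
  "drop_smaller xs ys = filter (\<lambda>(i, n). \<not> (\<exists>m. (i, m) \<in> set ys \<and> n < m)) xs"

definition chat :: "('v::linorder) constr \<Rightarrow> 'v constr" where
  "chat c = (case (nf_data (fst c), nf_data (snd c)) of ((k1, xs1), (k2, xs2)) \<Rightarrow>
     let ys1 = drop_smaller xs1 xs2; ys2 = drop_smaller xs2 xs1;
         m = Min ({k1, k2} \<union> snd ` set ys1 \<union> snd ` set ys2);
         sub = map (\<lambda>(i, n). (i, n - m))
     in (lvl_of (k1 - m, sub ys1), lvl_of (k2 - m, sub ys2)))"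

definition Chat :: "('v::linorder) constr set \<Rightarrow> 'v constr set" where
  "Chat C = chat ` C"

definition Csubst1 :: "'v constr set \<Rightarrow> 'v lvl \<Rightarrow> 'v \<Rightarrow> 'v constr set" where
  "Csubst1 C l j = (\<lambda>(a, b). (lsubst1 a l j, lsubst1 b l j)) ` C"

definition Cvars :: "'v constr set \<Rightarrow> 'v set" where
  "Cvars C = (\<Union>(a, b) \<in> C. lvars a \<union> lvars b)"

definition sat :: "('v \<Rightarrow> 'v lvl) \<Rightarrow> 'v constr set \<Rightarrow> bool" where
  "sat \<theta> C = (\<forall>(a, b) \<in> C. leqv (lsubst \<theta> a) (lsubst \<theta> b))"

definition sdom :: "('v \<Rightarrow> 'v lvl) \<Rightarrow> 'v set" where
  "sdom \<theta> = {i. \<theta> i \<noteq> LVar i}"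

definition srange :: "('v \<Rightarrow> 'v lvl) \<Rightarrow> 'v set" where
  "srange \<theta> = (\<Union>i \<in> sdom \<theta>. lvars (\<theta> i))"

definition svars :: "('v \<Rightarrow> 'v lvl) \<Rightarrow> 'v set" where
  "svars \<theta> = sdom \<theta> \<union> srange \<theta>"

definition shat :: "('v::linorder \<Rightarrow> 'v lvl) \<Rightarrow> 'v \<Rightarrow> 'v lvl" where
  "shat \<theta> = (\<lambda>i. if i \<in> sdom \<theta> then lhat (\<theta> i) else LVar i)"

definition ssubst1 :: "('v \<Rightarrow> 'v lvl) \<Rightarrow> 'v lvl \<Rightarrow> 'v \<Rightarrow> 'v \<Rightarrow> 'v lvl" where
  "ssubst1 \<theta> l j = (\<lambda>i. if i \<in> sdom \<theta> then lsubst1 (\<theta> i) l j else LVar i)"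

datatype 'v ustate = St "'v constr set" "'v \<Rightarrow> 'v lvl" | Bot

text \<open>\<open>z \<squnion> i\<close> in normal form, i.e. \<open>s^0 z \<squnion> s^0 i\<close>.\<close>
abbreviation zj :: "'v \<Rightarrow> 'v lvl" where
  "zj i \<equiv> LMax LZ (LVar i)"

inductive ustep :: "('v::linorder) set \<Rightarrow> 'v ustate \<Rightarrow> 'v ustate \<Rightarrow> bool"
  for Fr :: "'v set" where
  trivial: "ustep Fr (St (insert (l, l) C) \<theta>) (St C \<theta>)"
| orient: "l' = LZ \<or> (\<exists>i. l' = zj i) \<Longrightarrow>
     ustep Fr (St (insert (l, l') C) \<theta>) (St (insert (l', l) C) \<theta>)"
| elim1: "i \<notin> lvars l \<Longrightarrow>
     ustep Fr (St (insert (zj i, l) C) \<theta>)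
              (St (Chat (Csubst1 C l i)) ((shat (ssubst1 \<theta> l i))(i := l)))"
| elim2: "i' \<in> Fr - ({i} \<union> lvars l \<union> Cvars C \<union> svars \<theta>) \<Longrightarrow> LVar i \<in> summands l \<Longrightarrow>
     l' = lsubst1 l (LVar i') i \<Longrightarrow>
     ustep Fr (St (insert (zj i, l) C) \<theta>)
              (St (Chat (Csubst1 C l' i)) ((shat (ssubst1 \<theta> l' i))(i := l')))"
| decompose: "sorted_wrt (<) V \<Longrightarrow>
     ustep Fr (St (insert (LZ, lvl_of (0, map (\<lambda>i. (i, 0)) V)) C) \<theta>)
              (St ((\<lambda>i. (zj i, LZ)) ` set V \<union> C) \<theta>)"
| clash: "n \<noteq> 0 \<Longrightarrow> (spow n (LVar i) \<in> summands l \<or> spow n LZ \<in> summands l) \<Longrightarrow>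
     ustep Fr (St (insert (LZ, l) C) \<theta>) Bot"

end

theory Submission
  imports Defs
begin


fun ev :: "('v \<Rightarrow> nat) \<Rightarrow> 'v lvl \<Rightarrow> nat" where
  "ev \<rho> (LVar i) = \<rho> i" | "ev \<rho> LZ = 0" | "ev \<rho> (LS l) = Suc (ev \<rho> l)"
| "ev \<rho> (LMax a b) = max (ev \<rho> a) (ev \<rho> b)"

lemma ev_sound: "leqv a b \<Longrightarrow> ev \<rho> a = ev \<rho> b"
  by (induction rule: leqv.induct) auto

lemma ev_spow[simp]: "ev \<rho> (spow n x) = n + ev \<rho> x"
  by (induction n) (simp_all add: spow_def)

lemma ev_lsubst: "ev \<rho> (lsubst \<sigma> a) = ev (\<lambda>i. ev \<rho> (\<sigma> i)) a"
  by (induction a) auto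

lemma ev_joinr: "xs \<noteq> [] \<Longrightarrow> ev \<rho> (joinr xs) = Max (ev \<rho> ` set xs)"
  by (induction xs rule: joinr.induct) auto

lemma lvl_of_joinr: "lvl_of (k, xs) = joinr (spow k LZ # map (\<lambda>(i,n). spow n (LVar i)) xs)"
  by (cases xs) (auto simp: lvl_of_def)

lemma ev_lvl_of: "ev \<rho> (lvl_of (k, xs)) = Max (insert k ((\<lambda>(i,n). n + \<rho> i) ` set xs))"
proof -
  have "ev \<rho> ` set (map (\<lambda>(i,n). spow n (LVar i)) xs) = (\<lambda>(i,n). n + \<rho> i) ` set xs"
    by (force simp: image_image split: prod.splits)
  then show ?thesis by (simp add: lvl_of_joinr ev_joinr del: set_map)
qed

lemma ev_upd_notin: "j \<notin> lvars a \<Longrightarrow> ev (\<rho>(j:=v)) a = ev \<rho> a"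
  by (induction a) auto

lemma ev_lsubst1: "ev \<rho> (lsubst1 a l j) = ev (\<rho>(j := ev \<rho> l)) a"
  unfolding lsubst1_def ev_lsubst by (rule arg_cong[where f="\<lambda>r. ev r a"]) auto

lemma ev_summand: "s \<in> summands l \<Longrightarrow> ev \<rho> s \<le> ev \<rho> l"
  by (induction l rule: summands.induct) auto

declare leqv.intros[intro]
declare ltrans[trans]

definition lle where "lle a b = leqv (LMax a b) b"

lemma lt: "leqv a b \<Longrightarrow> leqv b c \<Longrightarrow> leqv a c" by (rule ltrans)
lemma ls: "leqv a b \<Longrightarrow> leqv b a" by (rule lsym)

lemma lle_refl: "lle a a" unfolding lle_def by blast

lemma lle_trans: "lle a b \<Longrightarrow> lle b c \<Longrightarrow> lle a c"
  unfolding lle_def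
proof -
  assume 1: "leqv (LMax a b) b" and 2: "leqv (LMax b c) c"
  have "leqv (LMax a c) (LMax a (LMax b c))" using 2 by blast
  also have "leqv \<dots> (LMax (LMax a b) c)" by blast
  also have "leqv \<dots> (LMax b c)" using 1 by blast
  also have "leqv \<dots> c" using 2 .
  finally show "leqv (LMax a c) c" .
qed

lemma lle_antisym: "lle a b \<Longrightarrow> lle b a \<Longrightarrow> leqv a b"
  unfolding lle_def
proof -
  assume 1: "leqv (LMax a b) b" and 2: "leqv (LMax b a) a"
  have "leqv a (LMax b a)" using 2 by blast
  also have "leqv \<dots> (LMax a b)" by blast
  also have "leqv \<dots> b" using 1 .
  finally show ?thesis by (simp add: lle_def)
qed

lemma lle_max: "lle a c \<Longrightarrow> lle b c \<Longrightarrow> lle (LMax a b) c"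
  unfolding lle_def
proof -
  assume 1: "leqv (LMax a c) c" and 2: "leqv (LMax b c) c"
  have "leqv (LMax (LMax a b) c) (LMax a (LMax b c))" by blast
  also have "leqv \<dots> (LMax a c)" using 2 by blast
  also have "leqv \<dots> c" using 1 .
  finally show "leqv (LMax (LMax a b) c) c" .
qed

lemma lle_maxL: "lle a (LMax a b)"
  unfolding lle_def
proof -
  have "leqv (LMax a (LMax a b)) (LMax (LMax a a) b)" by blast
  also have "leqv \<dots> (LMax a b)" by blast
  finally show "leqv (LMax a (LMax a b)) (LMax a b)" .
qed

lemma lle_maxR: "lle b (LMax a b)"
  using lle_maxL[of b a] unfolding lle_def
  by (meson lcomm lcongMax lrefl ltrans)

lemma lle_cong: "leqv a a' \<Longrightarrow> leqv b b' \<Longrightarrow> lle a b \<Longrightarrow> lle a' b'"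
  unfolding lle_def by (meson lcongMax ltrans lsym)

lemma lle_of_eq: "leqv a b \<Longrightarrow> lle a b"
  using lle_cong[OF _ lrefl lle_refl] by blast

lemma lle_join_mem: "x \<in> set ys \<Longrightarrow> lle x (joinr ys)"
proof (induction ys rule: joinr.induct)
  case (3 y z zs)
  then show ?case using lle_maxL lle_maxR lle_trans by fastforce
qed (auto simp: lle_refl)

lemma lle_joinr: "xs \<noteq> [] \<Longrightarrow> \<forall>x\<in>set xs. \<exists>y\<in>set ys. lle x y \<Longrightarrow> lle (joinr xs) (joinr ys)"
proof (induction xs rule: joinr.induct)
  case (2 x)
  then show ?case using lle_join_mem lle_trans by fastforce
next
  case (3 x y zs)
  then show ?case using lle_join_mem lle_trans lle_max by (metis joinr.simps(3) list.discI list.set_intros(1,2))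
qed simp

lemma lle_S: "lle a (LS a)" unfolding lle_def by blast

lemma lle_Smono: "lle a b \<Longrightarrow> lle (LS a) (LS b)"
  unfolding lle_def by (meson lcongS lsdist ltrans lsym)

lemma spow_Suc: "spow (Suc n) x = LS (spow n x)" by (simp add: spow_def)
lemma spow_0[simp]: "spow 0 x = x" by (simp add: spow_def)

lemma lle_spow: "n \<le> m \<Longrightarrow> lle (spow n x) (spow m x)"
proof (induction m)
  case 0 then show ?case by (simp add: lle_refl)
next
  case (Suc m)
  then show ?case
    by (metis le_SucE lle_S lle_refl lle_trans spow_Suc)
qed

lemma lle_z: "lle LZ x" unfolding lle_def by (meson lcomm lzero ltrans)

lemma lle_spow_z: "lle (spow n LZ) (spow n x)"
  by (induction n) (simp_all add: lle_z spow_Suc lle_Smono)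

lemma lle_spow_z2: "n \<le> m \<Longrightarrow> lle (spow n LZ) (spow m x)"
  using lle_spow lle_spow_z lle_trans by blast

lemma ground: "leqv (lsubst (\<lambda>i. spow (\<rho> i) LZ) a) (spow (ev \<rho> a) LZ)"
proof (induction a)
  case (LS a) then show ?case by (simp add: spow_Suc lcongS)
next
  case (LMax a b)
  have "leqv (LMax (spow n LZ) (spow m LZ)) (spow (max n m) LZ)" for n m :: nat
  proof (cases "n \<le> m")
    case True then show ?thesis using lle_spow[OF True] by (simp add: lle_def max_def)
  next
    case False then have "m \<le> n" by simp
    then have "leqv (LMax (spow m LZ) (spow n LZ)) (spow n LZ)" using lle_spow[of m n] unfolding lle_def by blast
    then show ?thesis using False lt[OF lcomm] by (simp add: max_def)
  qed
  then have X: "leqv (LMax (spow (ev \<rho> a) LZ) (spow (ev \<rho> b) LZ)) (spow (max (ev \<rho> a) (ev \<rho> b)) LZ)" .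
  show ?case using lt[OF lcongMax[OF LMax(1) LMax(2)] X] by simp
qed auto



fun flat :: "'v lvl \<Rightarrow> (nat \<times> 'v option) list" where
  "flat (LVar i) = [(0, Some i)]" | "flat LZ = [(0, None)]"
| "flat (LS l) = map (\<lambda>(n, q). (Suc n, q)) (flat l)"
| "flat (LMax a b) = flat a @ flat b"

fun atom :: "nat \<times> 'v option \<Rightarrow> 'v lvl" where
  "atom (n, None) = spow n LZ" | "atom (n, Some i) = spow n (LVar i)"

lemma flat_ne[simp]: "flat l \<noteq> []" by (induction l) auto

lemma joinr_LS: "xs \<noteq> [] \<Longrightarrow> leqv (LS (joinr xs)) (joinr (map LS xs))"
proof (induction xs rule: joinr.induct)
  case (3 x y zs)
  then show ?case by simp (meson lcongMax lrefl lsdist ltrans)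
qed auto

lemma joinr_append: "xs \<noteq> [] \<Longrightarrow> ys \<noteq> [] \<Longrightarrow> leqv (joinr (xs @ ys)) (LMax (joinr xs) (joinr ys))"
proof (rule lle_antisym)
  assume "xs \<noteq> []" "ys \<noteq> []"
  show "lle (joinr (xs @ ys)) (LMax (joinr xs) (joinr ys))"
  proof -
    have "lle x (LMax (joinr xs) (joinr ys))" if "x \<in> set (xs @ ys)" for x
      using that lle_join_mem lle_maxL lle_maxR lle_trans by fastforce
    then have "lle (joinr (xs @ ys)) (joinr [LMax (joinr xs) (joinr ys)])"
      using \<open>xs \<noteq> []\<close> by (intro lle_joinr) auto
    then show ?thesis by simp
  qed
  show "lle (LMax (joinr xs) (joinr ys)) (joinr (xs @ ys))"
    using \<open>xs \<noteq> []\<close> \<open>ys \<noteq> []\<close>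
    by (intro lle_max lle_joinr) (auto intro: lle_refl)
qed

lemma LS_atom: "LS (atom x) = atom ((\<lambda>(n, q). (Suc n, q)) x)"
  by (cases x rule: atom.cases) (auto simp: spow_Suc)

lemma flat_eq: "leqv l (joinr (map atom (flat l)))"
proof (induction l)
  case (LS l)
  have "leqv (LS l) (LS (joinr (map atom (flat l))))" using LS by blast
  also have "leqv \<dots> (joinr (map LS (map atom (flat l))))" by (rule joinr_LS) simp
  also have "map LS (map atom (flat l)) = map atom (flat (LS l))" by (simp add: LS_atom)
  finally show ?case .
next
  case (LMax a b)
  have "leqv (LMax a b) (LMax (joinr (map atom (flat a))) (joinr (map atom (flat b))))"
    using LMax by blast
  also have "leqv \<dots> (joinr (map atom (flat (LMax a b))))"
    by simp (rule lsym, rule joinr_append, auto)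
  finally show ?case .
qed auto

lemma lle_atoms: "m \<le> n \<Longrightarrow> lle (atom (m, q)) (atom (n, q))"
  by (cases q) (auto intro: lle_spow)

lemma nf_exists: "\<exists>d. nf_wf d \<and> leqv (lvl_of d) (l :: ('v::linorder) lvl)"
proof -
  define F where "F = flat l"
  define k where "k = Max (fst ` set F)"
  define V where "V = {i. \<exists>n. (n, Some i) \<in> set F}"
  define nd where "nd i = Max {n. (n, Some i) \<in> set F}" for i
  define xs where "xs = map (\<lambda>i. (i, nd i)) (sorted_list_of_set V)"
  have finV: "finite V"
  proof -
    have "V \<subseteq> (\<lambda>x. the (snd x)) ` set F" unfolding V_def by force
    then show ?thesis by (rule finite_subset) simp
  qed
  have finN: "finite {n. (n, Some i) \<in> set F}" for i
  proof -
    have "{n. (n, Some i) \<in> set F} \<subseteq> fst ` set F" by force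
    then show ?thesis by (rule finite_subset) simp
  qed
  have Fne: "F \<noteq> []" unfolding F_def by simp
  have kge: "n \<le> k" if "(n, q) \<in> set F" for n q
    unfolding k_def using that by (intro Max_ge) force+
  have ndin: "(nd i, Some i) \<in> set F" if "i \<in> V" for i
  proof -
    have "nd i \<in> {n. (n, Some i) \<in> set F}" unfolding nd_def
      using that finN by (intro Max_in) (auto simp: V_def)
    then show ?thesis by simp
  qed
  have ndge: "n \<le> nd i" if "(n, Some i) \<in> set F" for n i
    unfolding nd_def using that finN by (intro Max_ge) auto
  have setxs: "set xs = (\<lambda>i. (i, nd i)) ` V" unfolding xs_def using finV by simp
  have mfx: "map fst xs = sorted_list_of_set V" unfolding xs_def by (simp add: comp_def)
  have "\<forall>(i, n)\<in>set xs. n \<le> k"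
  proof
    fix p assume "p \<in> set xs"
    then obtain i where "i \<in> V" "p = (i, nd i)" using setxs by auto
    then show "case p of (i, n) \<Rightarrow> n \<le> k" using ndin kge by auto
  qed
  then have wf: "nf_wf (k, xs)"
    unfolding nf_wf_def using mfx by (simp add: strict_sorted_list_of_set)
  have kin: "\<exists>q. (k, q) \<in> set F"
  proof -
    have "k \<in> fst ` set F" unfolding k_def using Fne by (intro Max_in) auto
    then show ?thesis by force
  qed
  have "leqv (lvl_of (k, xs)) (joinr (map atom F))"
  proof (rule lle_antisym)
    show "lle (lvl_of (k, xs)) (joinr (map atom F))"
      unfolding lvl_of_joinr
    proof (rule lle_joinr, simp, intro ballI)
      fix x assume "x \<in> set (spow k LZ # map (\<lambda>(i, n). spow n (LVar i)) xs)"
      then consider "x = spow k LZ" | i where "i \<in> V" "x = spow (nd i) (LVar i)"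
        using setxs by auto
      then show "\<exists>y\<in>set (map atom F). lle x y"
      proof cases
        case 1
        obtain q where "(k, q) \<in> set F" using kin by blast
        moreover have "lle (spow k LZ) (atom (k, q))" using lle_spow_z lle_refl by (cases q) auto
        ultimately show ?thesis using 1 by (metis imageI set_map)
      next
        case 2
        then show ?thesis using ndin[OF 2(1)] lle_refl
          by (metis atom.simps(2) imageI set_map)
      qed
    qed
    show "lle (joinr (map atom F)) (lvl_of (k, xs))"
      unfolding lvl_of_joinr
    proof (rule lle_joinr, simp add: Fne, intro ballI)
      fix x assume "x \<in> set (map atom F)"
      then obtain n q where no: "(n, q) \<in> set F" "x = atom (n, q)" by auto
      show "\<exists>y\<in>set (spow k LZ # map (\<lambda>(i, n). spow n (LVar i)) xs). lle x y"
      proof (cases q)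
        case None
        then have "lle x (spow k LZ)" using no kge[OF no(1)] lle_spow by auto
        then show ?thesis by auto
      next
        case (Some i)
        then have "i \<in> V" using no V_def by auto
        then have "spow (nd i) (LVar i) \<in> set (map (\<lambda>(i, n). spow n (LVar i)) xs)"
          using setxs by force
        moreover have "lle x (spow (nd i) (LVar i))" using no Some ndge[of n i] lle_spow by auto
        ultimately show ?thesis by (meson list.set_intros(2))
      qed
    qed
  qed
  then have "leqv (lvl_of (k, xs)) l" using lt[OF _ lsym[OF flat_eq[of l]]] unfolding F_def by blast
  then show ?thesis using wf by blast
qed

lemma nf_distinct: "nf_wf (k, xs) \<Longrightarrow> distinct (map fst xs)"
  unfolding nf_wf_def by (simp add: strict_sorted_iff)

lemma probe0: "nf_wf (k, xs) \<Longrightarrow> ev (\<lambda>_. 0) (lvl_of (k, xs)) = k"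
  unfolding ev_lvl_of nf_wf_def by (intro Max_eqI) auto

lemma probe_in: "nf_wf (k, xs) \<Longrightarrow> (i, n) \<in> set xs \<Longrightarrow>
   ev ((\<lambda>_. 0)(i := Suc k)) (lvl_of (k, xs)) = n + Suc k"
proof -
  assume wf: "nf_wf (k, xs)" and in1: "(i, n) \<in> set xs"
  have d: "distinct (map fst xs)" using nf_distinct[OF wf] .
  have le: "\<forall>(j, m)\<in>set xs. m \<le> k" using wf unfolding nf_wf_def by simp
  show ?thesis unfolding ev_lvl_of
  proof (rule Max_eqI)
    fix y assume "y \<in> insert k ((\<lambda>(i', n). n + ((\<lambda>_. 0)(i := Suc k)) i') ` set xs)"
    then show "y \<le> n + Suc k"
      using le eq_key_imp_eq_value[OF d in1] by (auto split: if_splits)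
  qed (use in1 in force)+
qed

lemma probe_out: "nf_wf (k, xs) \<Longrightarrow> \<forall>m. (i, m) \<notin> set xs \<Longrightarrow>
   ev ((\<lambda>_. 0)(i := Suc k)) (lvl_of (k, xs)) = k"
  unfolding ev_lvl_of nf_wf_def by (intro Max_eqI) (auto split: if_splits)

lemma nf_unique:
  assumes w1: "nf_wf (k1, xs1)" and w2: "nf_wf (k2, xs2)"
    and e: "\<And>\<rho>. ev \<rho> (lvl_of (k1, xs1)) = ev \<rho> (lvl_of (k2, xs2))"
  shows "(k1, xs1) = (k2, xs2)"
proof -
  have k: "k1 = k2" using e[of "\<lambda>_. 0"] probe0[OF w1] probe0[OF w2] by simp
  have sub: "set xs \<subseteq> set ys"
    if wa: "nf_wf (k, xs)" and wb: "nf_wf (k, ys)"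
      and ee: "\<And>\<rho>. ev \<rho> (lvl_of (k, xs)) = ev \<rho> (lvl_of (k, ys))" for xs ys k
  proof
    fix p assume p: "p \<in> set xs"
    obtain i n where pin: "p = (i, n)" by (cases p)
    show "p \<in> set ys"
    proof (cases "\<exists>m. (i, m) \<in> set ys")
      case True
      then obtain m where "(i, m) \<in> set ys" by blast
      then show ?thesis using probe_in[OF wa p[unfolded pin]] probe_in[OF wb]
          ee[of "(\<lambda>_. 0)(i := Suc k)"] pin by simp
    next
      case False
      then show ?thesis using probe_in[OF wa p[unfolded pin]] probe_out[OF wb]
          ee[of "(\<lambda>_. 0)(i := Suc k)"] pin by simp
    qed
  qed
  have s: "set xs1 = set xs2" using sub[OF w1 w2[folded k]] sub[OF w2[folded k] w1] e k by auto
  have sf: "sorted_wrt (<) (map fst xs1)" "sorted_wrt (<) (map fst xs2)"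
    using w1 w2 unfolding nf_wf_def by auto
  have mf: "map fst xs1 = map fst xs2"
    by (rule strict_sorted_equal[OF sf(2) sf(1)]) (simp add: s)
  have "xs1 = xs2"
  proof (rule nth_equalityI)
    show l: "length xs1 = length xs2" using arg_cong[OF mf, of length] by simp
    fix j assume j: "j < length xs1"
    have f: "fst (xs1 ! j) = fst (xs2 ! j)" using arg_cong[OF mf, of "\<lambda>x. x ! j"] j l by simp
    have "xs1 ! j \<in> set xs2" using j s nth_mem by blast
    moreover have "xs2 ! j \<in> set xs2" using j l by simp
    ultimately have "snd (xs1 ! j) = snd (xs2 ! j)"
      using eq_key_imp_eq_value[OF nf_distinct[OF w2]] f
      by (metis prod.collapse)
    then show "xs1 ! j = xs2 ! j" using f by (simp add: prod_eq_iff)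
  qed
  then show ?thesis using k by simp
qed

lemma nf_data: "nf_wf (nf_data l) \<and> leqv (lvl_of (nf_data l)) l"
  unfolding nf_data_def
proof (rule theI')
  obtain d where d: "nf_wf d" "leqv (lvl_of d) l" using nf_exists by blast
  show "\<exists>!d. nf_wf d \<and> leqv (lvl_of d) l"
  proof (rule ex1I[of _ d])
    show "nf_wf d \<and> leqv (lvl_of d) l" using d by simp
    fix d' assume d': "nf_wf d' \<and> leqv (lvl_of d') l"
    obtain k xs where kx: "d = (k, xs)" by (cases d)
    obtain k' xs' where kx': "d' = (k', xs')" by (cases d')
    show "d' = d" unfolding kx kx'
      by (rule nf_unique) (use d d' kx kx' in \<open>auto intro: ev_sound lsym ltrans\<close>)
  qed
qed

lemma ev_nf_data: "ev \<rho> (lvl_of (nf_data l)) = ev \<rho> l"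
  using nf_data ev_sound by blast



definition FM :: "('v \<Rightarrow> nat) \<Rightarrow> nat \<Rightarrow> ('v \<times> nat) list \<Rightarrow> nat" where
  "FM \<rho> k xs = Max (insert k ((\<lambda>(i,n). n + \<rho> i) ` set xs))"

lemma drop_FM:
  assumes e: "FM \<rho> k1 xs1 = FM \<rho> k2 xs2"
  shows "FM \<rho> k1 (drop_smaller xs1 xs2) = FM \<rho> k1 xs1"
proof (rule antisym)
  show "FM \<rho> k1 (drop_smaller xs1 xs2) \<le> FM \<rho> k1 xs1"
    unfolding FM_def drop_smaller_def by (rule Max_mono) auto
  have "FM \<rho> k1 xs1 \<in> insert k1 ((\<lambda>(i,n). n + \<rho> i) ` set xs1)"
    unfolding FM_def by (rule Max_in) auto
  then show "FM \<rho> k1 xs1 \<le> FM \<rho> k1 (drop_smaller xs1 xs2)"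
  proof
    assume "FM \<rho> k1 xs1 = k1"
    then show ?thesis unfolding FM_def by (metis Max_ge finite_imageI finite_insert finite_set insertI1)
  next
    assume "FM \<rho> k1 xs1 \<in> (\<lambda>(i,n). n + \<rho> i) ` set xs1"
    then obtain i n where p: "(i, n) \<in> set xs1" "FM \<rho> k1 xs1 = n + \<rho> i" by auto
    show ?thesis
    proof (cases "\<exists>m. (i, m) \<in> set xs2 \<and> n < m")
      case True
      then obtain m where m: "(i, m) \<in> set xs2" "n < m" by blast
      have "m + \<rho> i \<le> FM \<rho> k2 xs2" unfolding FM_def
        by (rule Max_ge) (use m in force)+
      then show ?thesis using p m e by simp
    next
      case False
      then have "(i, n) \<in> set (drop_smaller xs1 xs2)" using p unfolding drop_smaller_def by auto
      then have "n + \<rho> i \<le> FM \<rho> k1 (drop_smaller xs1 xs2)" unfolding FM_def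
        by (intro Max_ge) force+
      then show ?thesis using p by simp
    qed
  qed
qed

lemma FM_sub:
  assumes "m \<le> k" "\<forall>(i, n)\<in>set ys. m \<le> n"
  shows "ev \<rho> (lvl_of (k - m, map (\<lambda>(i, n). (i, n - m)) ys)) = FM \<rho> k ys - m"
proof -
  have "FM \<rho> k ys - m = Max ((\<lambda>x. x - m) ` insert k ((\<lambda>(i,n). n + \<rho> i) ` set ys))"
    unfolding FM_def by (rule mono_Max_commute) (auto simp: mono_def)
  also have "(\<lambda>x. x - m) ` insert k ((\<lambda>(i,n). n + \<rho> i) ` set ys)
      = insert (k - m) ((\<lambda>(i,n). n + \<rho> i) ` set (map (\<lambda>(i, n). (i, n - m)) ys))"
    using assms by (force simp: image_image)
  finally show ?thesis unfolding ev_lvl_of by simp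
qed

lemma ev_nf_FM: "ev \<rho> l = FM \<rho> (fst (nf_data l)) (snd (nf_data l))"
  using ev_nf_data[of \<rho> l] unfolding FM_def by (simp add: ev_lvl_of[symmetric])

lemma chat_sound:
  assumes "ev \<rho> a = ev \<rho> b"
  shows "ev \<rho> (fst (chat (a, b))) = ev \<rho> (snd (chat (a, b)))"
proof -
  obtain k1 xs1 where d1: "nf_data a = (k1, xs1)" by (cases "nf_data a")
  obtain k2 xs2 where d2: "nf_data b = (k2, xs2)" by (cases "nf_data b")
  have e: "FM \<rho> k1 xs1 = FM \<rho> k2 xs2" using assms ev_nf_FM[of \<rho> a] ev_nf_FM[of \<rho> b] d1 d2 by simp
  define ys1 where "ys1 = drop_smaller xs1 xs2"
  define ys2 where "ys2 = drop_smaller xs2 xs1"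
  define m where "m = Min ({k1, k2} \<union> snd ` set ys1 \<union> snd ` set ys2)"
  have fin: "finite ({k1, k2} \<union> snd ` set ys1 \<union> snd ` set ys2)" by simp
  have m1: "m \<le> k1" "m \<le> k2" unfolding m_def by (rule Min_le[OF fin], simp)+
  have m2: "\<forall>(i, n)\<in>set ys1. m \<le> n" "\<forall>(i, n)\<in>set ys2. m \<le> n"
  proof (safe)
    fix i n assume "(i, n) \<in> set ys1"
    then have "n \<in> {k1, k2} \<union> snd ` set ys1 \<union> snd ` set ys2" by force
    then show "m \<le> n" unfolding m_def using fin by (rule Min_le[rotated])
  next
    fix i n assume "(i, n) \<in> set ys2"
    then have "n \<in> {k1, k2} \<union> snd ` set ys1 \<union> snd ` set ys2" by force
    then show "m \<le> n" unfolding m_def using fin by (rule Min_le[rotated])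
  qed
  have y1: "FM \<rho> k1 ys1 = FM \<rho> k1 xs1" unfolding ys1_def by (rule drop_FM[OF e])
  have y2: "FM \<rho> k2 ys2 = FM \<rho> k2 xs2" unfolding ys2_def by (rule drop_FM[OF e[symmetric]])
  have c: "chat (a, b) = (lvl_of (k1 - m, map (\<lambda>(i, n). (i, n - m)) ys1),
                          lvl_of (k2 - m, map (\<lambda>(i, n). (i, n - m)) ys2))"
    unfolding chat_def fst_conv snd_conv d1 d2 prod.case Let_def
      ys1_def[symmetric] ys2_def[symmetric] m_def[symmetric] by (rule refl)
  show ?thesis unfolding c using FM_sub[OF m1(1) m2(1)] FM_sub[OF m1(2) m2(2)] y1 y2 e by simp
qed

definition msat :: "('v \<Rightarrow> nat) \<Rightarrow> 'v constr set \<Rightarrow> bool" where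
  "msat \<rho> C = (\<forall>(a, b) \<in> C. ev \<rho> a = ev \<rho> b)"

lemma msat_Chat: "msat \<rho> C \<Longrightarrow> msat \<rho> (Chat C)"
  unfolding msat_def Chat_def
proof (intro ballI)
  fix p assume a: "\<forall>(a, b)\<in>C. ev \<rho> a = ev \<rho> b" and "p \<in> chat ` C"
  then obtain a b where "(a, b) \<in> C" "p = chat (a, b)" by auto
  then show "case p of (a, b) \<Rightarrow> ev \<rho> a = ev \<rho> b"
    using a chat_sound[of \<rho> a b] by (cases p) auto
qed

lemma sat_msat: "sat \<theta> C \<Longrightarrow> msat (\<lambda>i. ev (\<lambda>_. 0) (\<theta> i)) C"
  unfolding sat_def msat_def
proof (intro ballI)
  fix p assume a: "\<forall>(a, b)\<in>C. leqv (lsubst \<theta> a) (lsubst \<theta> b)" and p: "p \<in> C"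
  obtain a b where ab: "p = (a, b)" by (cases p)
  have "ev (\<lambda>_. 0) (lsubst \<theta> a) = ev (\<lambda>_. 0) (lsubst \<theta> b)"
    using a p ab ev_sound by fastforce
  then show "case p of (a, b) \<Rightarrow> ev (\<lambda>i. ev (\<lambda>_. 0) (\<theta> i)) a = ev (\<lambda>i. ev (\<lambda>_. 0) (\<theta> i)) b"
    unfolding ab ev_lsubst by simp
qed

lemma msat_sat: "msat \<rho> C \<Longrightarrow> sat (\<lambda>i. spow (\<rho> i) LZ) C"
  unfolding sat_def msat_def
proof (intro ballI)
  fix p assume a: "\<forall>(a, b)\<in>C. ev \<rho> a = ev \<rho> b" and p: "p \<in> C"
  obtain a b where ab: "p = (a, b)" by (cases p)
  have e: "ev \<rho> a = ev \<rho> b" using a p ab by auto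
  show "case p of (a, b) \<Rightarrow> leqv (lsubst (\<lambda>i. spow (\<rho> i) LZ) a) (lsubst (\<lambda>i. spow (\<rho> i) LZ) b)"
    unfolding ab using lt[OF ground[of \<rho> a] lsym[OF ground[of \<rho> b, folded e]]] by simp
qed

fun good :: "('v::linorder) ustate \<Rightarrow> bool" where
  "good (St C \<theta>) = (\<exists>\<rho>. msat \<rho> C)" | "good Bot = False"

lemma Cvars_mem: "(a, b) \<in> C \<Longrightarrow> lvars a \<union> lvars b \<subseteq> Cvars C"
  unfolding Cvars_def by auto

lemma step_good: "ustep Fr s s' \<Longrightarrow> good s \<Longrightarrow> good s'"
proof (induction rule: ustep.induct)
  case (trivial l C \<theta>)
  then show ?case by (auto simp: msat_def)
next
  case (orient l' l C \<theta>)
  then obtain \<rho> where "msat \<rho> (insert (l, l') C)" by auto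
  then have "msat \<rho> (insert (l', l) C)" unfolding msat_def by auto
  then show ?case by auto
next
  case (elim1 i l C \<theta>)
  then obtain \<rho> where r: "msat \<rho> (insert (zj i, l) C)" by auto
  then have ri: "\<rho> i = ev \<rho> l" unfolding msat_def by simp
  have upd: "\<rho>(i := ev \<rho> l) = \<rho>" using ri by auto
  have "msat \<rho> (Csubst1 C l i)"
    using r unfolding msat_def Csubst1_def by (auto simp: ev_lsubst1 upd)
  then show ?case using msat_Chat by auto
next
  case (elim2 i' i l C \<theta> l')
  then obtain \<rho> where r: "msat \<rho> (insert (zj i, l) C)" by auto
  then have ri: "\<rho> i = ev \<rho> l" unfolding msat_def by simp
  define \<rho>' where "\<rho>' = \<rho>(i' := \<rho> i)"
  have nl: "i' \<notin> lvars l" and nC: "i' \<notin> Cvars C" using elim2(1) by auto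
  have el: "ev \<rho>' l' = \<rho> i"
    unfolding elim2(3) ev_lsubst1 \<rho>'_def using nl ri
    by (simp add: fun_upd_twist) (metis ev_upd_notin fun_upd_triv fun_upd_upd fun_upd_twist)
  have upd: "\<rho>'(i := ev \<rho>' l') = \<rho>'" by (simp only: el) (auto simp: \<rho>'_def)
  have ea: "ev \<rho>' a = ev \<rho> a" "ev \<rho>' b = ev \<rho> b" if "(a, b) \<in> C" for a b
  proof -
    have "i' \<notin> lvars a" "i' \<notin> lvars b" using nC Cvars_mem[OF that] by auto
    then show "ev \<rho>' a = ev \<rho> a" "ev \<rho>' b = ev \<rho> b" unfolding \<rho>'_def by (simp_all add: ev_upd_notin)
  qed
  have "ev \<rho>' a = ev \<rho>' b" if "(a, b) \<in> C" for a b
  proof -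
    have "ev \<rho> a = ev \<rho> b" using r that unfolding msat_def by auto
    then show ?thesis using ea[OF that] by simp
  qed
  then have "msat \<rho>' (Csubst1 C l' i)"
    unfolding msat_def Csubst1_def by (auto simp: ev_lsubst1 upd)
  then show ?case using msat_Chat by auto
next
  case (decompose V C \<theta>)
  then obtain \<rho> where r: "msat \<rho> (insert (LZ, lvl_of (0, map (\<lambda>i. (i, 0)) V)) C)" by auto
  then have z: "ev \<rho> (lvl_of (0, map (\<lambda>i. (i, 0)) V)) = 0" unfolding msat_def by simp
  have "\<rho> i = 0" if "i \<in> set V" for i
  proof -
    have "\<rho> i \<le> ev \<rho> (lvl_of (0, map (\<lambda>i. (i, 0)) V))" unfolding ev_lvl_of
      by (rule Max_ge) (use that in force)+
    then show ?thesis using z by simp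
  qed
  then have "msat \<rho> ((\<lambda>i. (zj i, LZ)) ` set V \<union> C)" using r unfolding msat_def by auto
  then show ?case by auto
next
  case (clash n i l C \<theta>)
  then obtain \<rho> where r: "msat \<rho> (insert (LZ, l) C)" by auto
  then have z: "ev \<rho> l = 0" unfolding msat_def by simp
  from clash(2) obtain x where "spow n x \<in> summands l" by blast
  then have "n \<le> ev \<rho> l" using ev_summand[of "spow n x" l \<rho>] by simp
  then show ?case using z clash(1) by simp
qed

theorem mainTheorem10:
  fixes Ifresh :: "('v::linorder) set" and C :: "'v constr set"
  assumes "infinite Ifresh" and "Ifresh \<noteq> UNIV"
    and "finite C" and "\<forall>c \<in> C. c_nf c"
    and "Cvars C \<inter> Ifresh = {}"
    and "(ustep Ifresh)\<^sup>*\<^sup>* (St C LVar) Bot"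
  shows "\<not> (\<exists>\<theta>. sat \<theta> C)"
proof
  assume "\<exists>\<theta>. sat \<theta> C"
  then have g: "good (St C LVar)" using sat_msat by auto
  have "good s" if "(ustep Ifresh)\<^sup>*\<^sup>* (St C LVar) s" for s
    using that g by (induction rule: rtranclp_induct) (auto intro: step_good)
  from this[OF assms(6)] show False by simp
qed

end
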